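(* Let $\mathcal{X},\mathcal{Y},\mathcal{Z}$ be bounded subsets of a metric space $(\mathcal{S},\eta)$, let $X$ be an uncertain variable with marginal range $[[X]]=\mathcal{X}$, and let $Y=g(X)$ and $Z=h(X)$, where $g:\mathcal{X}\to\mathcal{Y}$ is $L$-invertible and $h:\mathcal{X}\to\mathcal{Z}$ is Lipschitz. Then there exists $L_{Z|Y}\ge0$ such that $\mathcal{H}([[Z|y^1]],[[Z|y^2]])\le L_{Z|Y}\,\eta(y^1,y^2)$ for all $y^1,y^2\in[[Y]]$.
   Context: Uncertain variables: fix a sample space $\Omega$; an uncertain variable with values in a set $\mathcal{X}$ is a map $X:\Omega\to\mathcal{X}$, with marginal range $[[X]]:=\{X(\omega):\omega\in\Omega\}$; for uncertain variables $Z,Y$ and $y\in[[Y]]$, the conditional range is $[[Z|y]]:=\{Z(\omega):\omega\in\Omega,\ Y(\omega)=y\}$. Hausdorff distance: for nonempty $\mathcal{A},\mathcal{B}\subseteq\mathcal{S}$, $\mathcal{H}(\mathcal{A},\mathcal{B}):=\max\{\sup_{a\in\mathcal{A}}\inf_{b\in\mathcal{B}}\eta(a,b),\sup_{b\in\mathcal{B}}\inf_{a\in\mathcal{A}}\eta(a,b)\}$. A function $g:\mathcal{X}\to\mathcal{Y}$ is $L$-invertible if there is $L_{g^{-1}}\ge0$ with $\mathcal{H}(g^{-1}(y^1),g^{-1}(y^2))\le L_{g^{-1}}\eta(y^1,y^2)$ for all $y^1,y^2$ in $g(\mathcal{X})$, where $g^{-1}(y)=\{x\in\mathcal{X}:g(x)=y\}$.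 *)

theory Defs
  imports "HOL-Analysis.Analysis"
begin

definition marg_range :: "'w set \<Rightarrow> ('w \<Rightarrow> 'x) \<Rightarrow> 'x set" where
  "marg_range \<Omega> X = {X \<omega> | \<omega>. \<omega> \<in> \<Omega>}"

definition cond_range :: "'w set \<Rightarrow> ('w \<Rightarrow> 'z) \<Rightarrow> ('w \<Rightarrow> 'y) \<Rightarrow> 'y \<Rightarrow> 'z set" where
  "cond_range \<Omega> Z Y y = {Z \<omega> | \<omega>. \<omega> \<in> \<Omega> \<and> Y \<omega> = y}"

text \<open>Hausdorff distance as in the paper (used only on nonempty bounded sets,
  where the real-valued Sup/Inf are the genuine suprema/infima).\<close>
definition hausdorff :: "'s::metric_space set \<Rightarrow> 's set \<Rightarrow> real" where
  "hausdorff A B = max (SUP a\<in>A. INF b\<in>B. dist a b) (SUP b\<in>B. INF a\<in>A. dist a b)"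

definition L_invertible :: "'s::metric_space set \<Rightarrow> ('s \<Rightarrow> 's) \<Rightarrow> bool" where
  "L_invertible A g \<longleftrightarrow> (\<exists>L\<ge>0. \<forall>y1\<in>g ` A. \<forall>y2\<in>g ` A.
      hausdorff {x\<in>A. g x = y1} {x\<in>A. g x = y2} \<le> L * dist y1 y2)"

end

theory Submission
  imports Defs
begin

lemma half_lip:
  fixes h :: "'s::metric_space \<Rightarrow> 's"
  assumes lip: "C-lipschitz_on S h" and AS: "A \<subseteq> S" and BS: "B \<subseteq> S"
    and An: "A \<noteq> {}" and Bn: "B \<noteq> {}" and bS: "bounded S"
  shows "(SUP a\<in>A. INF b\<in>B. dist (h a) (h b)) \<le> C * (SUP a\<in>A. INF b\<in>B. dist a b)"
proof -
  have C0: "0 \<le> C" using lip by (rule lipschitz_on_nonneg)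
  obtain e where e: "\<forall>x\<in>S. \<forall>y\<in>S. dist x y \<le> e" using bS bounded_two_points by blast
  obtain b0 where b0: "b0 \<in> B" using Bn by blast
  have bdA: "bdd_above ((\<lambda>a. INF b\<in>B. dist a b) ` A)"
  proof (rule bdd_aboveI2)
    fix a assume a: "a \<in> A"
    have "(INF b\<in>B. dist a b) \<le> dist a b0"
      by (rule cINF_lower[OF _ b0]) (auto intro: bdd_belowI2[where m=0])
    also have "\<dots> \<le> e" using e a b0 AS BS by blast
    finally show "(INF b\<in>B. dist a b) \<le> e" .
  qed
  show ?thesis
  proof (rule cSUP_least[OF An])
    fix a assume a: "a \<in> A"
    let ?m = "INF b\<in>B. dist (h a) (h b)"
    have m: "?m \<le> C * dist a b" if b: "b \<in> B" for b
    proof -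
      have "?m \<le> dist (h a) (h b)"
        by (rule cINF_lower[OF _ b]) (auto intro: bdd_belowI2[where m=0])
      also have "\<dots> \<le> C * dist a b" using lipschitz_onD[OF lip] a b AS BS by blast
      finally show ?thesis .
    qed
    have "?m \<le> C * (INF b\<in>B. dist a b)"
    proof (cases "C = 0")
      case True
      then show ?thesis using m b0 by auto
    next
      case False
      with C0 have Cp: "C > 0" by simp
      have "?m / C \<le> (INF b\<in>B. dist a b)"
        using m Cp by (intro cINF_greatest[OF Bn]) (simp add: divide_le_eq mult.commute)
      then show ?thesis using Cp by (simp add: divide_le_eq mult.commute)
    qed
    also have "\<dots> \<le> C * (SUP a\<in>A. INF b\<in>B. dist a b)"
      by (rule mult_left_mono[OF cSUP_upper[OF a bdA] C0])
    finally show "?m \<le> C * (SUP a\<in>A. INF b\<in>B. dist a b)" .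
  qed
qed

lemma haus_lip:
  fixes h :: "'s::metric_space \<Rightarrow> 's"
  assumes lip: "C-lipschitz_on S h" and AS: "A \<subseteq> S" and BS: "B \<subseteq> S"
    and An: "A \<noteq> {}" and Bn: "B \<noteq> {}" and bS: "bounded S"
  shows "hausdorff (h ` A) (h ` B) \<le> C * hausdorff A B"
proof -
  have C0: "0 \<le> C" using lip by (rule lipschitz_on_nonneg)
  have 1: "(SUP a\<in>A. INF b\<in>B. dist (h a) (h b)) \<le> C * (SUP a\<in>A. INF b\<in>B. dist a b)"
    by (rule half_lip[OF assms])
  have 2: "(SUP b\<in>B. INF a\<in>A. dist (h b) (h a)) \<le> C * (SUP b\<in>B. INF a\<in>A. dist b a)"
    by (rule half_lip[OF lip BS AS Bn An bS])
  have 3: "(SUP b\<in>B. INF a\<in>A. dist (h a) (h b)) \<le> C * (SUP b\<in>B. INF a\<in>A. dist a b)"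
    using 2 by (simp add: dist_commute)
  have "hausdorff (h ` A) (h ` B) = max (SUP a\<in>A. INF b\<in>B. dist (h a) (h b)) (SUP b\<in>B. INF a\<in>A. dist (h a) (h b))"
    by (simp add: hausdorff_def image_image)
  also have "\<dots> \<le> max (C * (SUP a\<in>A. INF b\<in>B. dist a b)) (C * (SUP b\<in>B. INF a\<in>A. dist a b))"
    using 1 3 by (rule max.mono)
  also have "\<dots> = C * hausdorff A B"
    using C0 by (simp add: hausdorff_def max_mult_distrib_left)
  finally show ?thesis .
qed

theorem lemma6:
  fixes \<Omega> :: "'w set" and X :: "'w \<Rightarrow> 's::metric_space"
    and g h :: "'s \<Rightarrow> 's" and XX YY ZZ :: "'s set"
  assumes "bounded XX" and "bounded YY" and "bounded ZZ"
    and "marg_range \<Omega> X = XX"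
    and "g ` XX \<subseteq> YY" and "h ` XX \<subseteq> ZZ"
    and "L_invertible XX g"
    and "\<exists>C. C-lipschitz_on XX h"
  shows "\<exists>LZY\<ge>0. \<forall>y1\<in>marg_range \<Omega> (g \<circ> X). \<forall>y2\<in>marg_range \<Omega> (g \<circ> X).
           hausdorff (cond_range \<Omega> (h \<circ> X) (g \<circ> X) y1) (cond_range \<Omega> (h \<circ> X) (g \<circ> X) y2)
             \<le> LZY * dist y1 y2"
proof -
  obtain C where lip: "C-lipschitz_on XX h" using assms(8) by blast
  have C0: "0 \<le> C" using lip by (rule lipschitz_on_nonneg)
  obtain L where L0: "L \<ge> 0" and L: "\<forall>y1\<in>g ` XX. \<forall>y2\<in>g ` XX.
      hausdorff {x\<in>XX. g x = y1} {x\<in>XX. g x = y2} \<le> L * dist y1 y2"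
    using assms(7) unfolding L_invertible_def by blast
  have cr: "cond_range \<Omega> (h \<circ> X) (g \<circ> X) y = h ` {x\<in>XX. g x = y}" for y
    using assms(4) unfolding cond_range_def marg_range_def by auto
  have mr: "marg_range \<Omega> (g \<circ> X) = g ` XX"
    using assms(4) unfolding marg_range_def by auto
  show ?thesis
  proof (intro exI[of _ "C * L"] conjI ballI)
    show "0 \<le> C * L" using C0 L0 by simp
    fix y1 y2 assume y1: "y1 \<in> marg_range \<Omega> (g \<circ> X)" and y2: "y2 \<in> marg_range \<Omega> (g \<circ> X)"
    have ne1: "{x\<in>XX. g x = y1} \<noteq> {}" using y1 mr by auto
    have ne2: "{x\<in>XX. g x = y2} \<noteq> {}" using y2 mr by auto
    have "hausdorff (cond_range \<Omega> (h \<circ> X) (g \<circ> X) y1) (cond_range \<Omega> (h \<circ> X) (g \<circ> X) y2)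
        \<le> C * hausdorff {x\<in>XX. g x = y1} {x\<in>XX. g x = y2}"
      unfolding cr by (rule haus_lip[OF lip _ _ ne1 ne2 assms(1)]) auto
    also have "\<dots> \<le> C * (L * dist y1 y2)"
      using L y1 y2 mr C0 by (intro mult_left_mono) auto
    finally show "hausdorff (cond_range \<Omega> (h \<circ> X) (g \<circ> X) y1) (cond_range \<Omega> (h \<circ> X) (g \<circ> X) y2)
             \<le> C * L * dist y1 y2" by (simp add: mult.assoc)
  qed
qed

end
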